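(* Consider the four-oscillator system below with $\alpha_\mathrm{s}=\frac{\pi}{2}$, $\alpha_\mathrm{n}=0$ and arbitrary $A\in\mathbb{R}$, $\omega\in\mathbb{R}$. Then the function $$H^{(-1,0)}(\psi_1,\psi_3)=\cot\!\left(\frac{\psi_1+\psi_3}{4}\right)\tan\!\left(\frac{\psi_1-\psi_3}{4}\right)$$ (with $\psi_1,\psi_3$ the real-valued phase differences of a solution) is constant along every solution on any time interval on which it is defined (i.e. on which $(\psi_1+\psi_3)/4\notin\pi\mathbb{Z}$ and $(\psi_1-\psi_3)/4\notin \pi/2+\pi\mathbb{Z}$).
   Context: Network of $M=2$ populations of $N=2$ phase oscillators with phases $\theta_{\sigma,k}(t)\in\mathbb{R}$ (population $\sigma\in\{1,2\}$, oscillator $k\in\{1,2\}$), evolving by $$\dot\theta_{\sigma,k}=\omega+\frac{K_\mathrm{s}}{4}\sum_{j=1}^{2}\sin(\theta_{\sigma,j}-\theta_{\sigma,k}-\alpha_\mathrm{s})+\frac{K_\mathrm{n}}{4}\sum_{j=1}^{2}\sin(\theta_{\tau,j}-\theta_{\sigma,k}-\alpha_\mathrm{n}),$$ where $\tau$ denotes the population other than $\sigma$, $\omega\in\mathbb{R}$, $\alpha_\mathrm{s},\alpha_\mathrm{n}\in\mathbb{R}$ are phase lags, and the coupling strengths are parametrized by $A\in\mathbb{R}$ via $K_\mathrm{s}=(1+A)/2$, $K_\mathrm{n}=(1-A)/2$ (so $K_\mathrm{s}+K_\mathrm{n}=1$, $A=K_\mathrm{s}-K_\mathrm{n}$). The phase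 differences are $\psi_1=\theta_{1,1}-\theta_{1,2}$, $\psi_2=\theta_{1,2}-\theta_{2,1}$, $\psi_3=\theta_{2,1}-\theta_{2,2}$; they satisfy an autonomous ODE (the reduced system) since the right-hand side depends only on phase differences. *)

theory Defs
  imports "HOL-Analysis.Analysis"
begin

definition Ks :: "real \<Rightarrow> real" where "Ks A = (1 + A) / 2"
definition Kn :: "real \<Rightarrow> real" where "Kn A = (1 - A) / 2"

text \<open>Right-hand side of the network ODE. A state is x :: nat => nat => real,
  x sigma k being the phase of oscillator k in population sigma (sigma, k in {1,2}).
  The other population is 3 - sigma.\<close>
definition rhs :: "real \<Rightarrow> real \<Rightarrow> real \<Rightarrow> real \<Rightarrow> (nat \<Rightarrow> nat \<Rightarrow> real) \<Rightarrow> nat \<Rightarrow> nat \<Rightarrow> real" where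
  "rhs \<omega> A \<alpha>s \<alpha>n x \<sigma> k =
     \<omega> + Ks A / 4 * (\<Sum>j\<in>{1,2::nat}. sin (x \<sigma> j - x \<sigma> k - \<alpha>s))
       + Kn A / 4 * (\<Sum>j\<in>{1,2::nat}. sin (x (3 - \<sigma>) j - x \<sigma> k - \<alpha>n))"

definition psi1 :: "(nat \<Rightarrow> nat \<Rightarrow> real) \<Rightarrow> real" where "psi1 x = x 1 1 - x 1 2"
definition psi3 :: "(nat \<Rightarrow> nat \<Rightarrow> real) \<Rightarrow> real" where "psi3 x = x 2 1 - x 2 2"

definition Hm10 :: "real \<Rightarrow> real \<Rightarrow> real" where
  "Hm10 \<psi>1 \<psi>3 = cot ((\<psi>1 + \<psi>3) / 4) * tan ((\<psi>1 - \<psi>3) / 4)"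

end

theory Submission
  imports Defs
begin

lemma key:
  fixes a b c d K :: real
  assumes su: "sin ((a-b+(c-d))/4) \<noteq> 0" and cv: "cos ((a-b-(c-d))/4) \<noteq> 0"
  defines "P \<equiv> K/4*(sin(c-a)+sin(d-a)-sin(c-b)-sin(d-b))"
  defines "Q \<equiv> K/4*(sin(a-c)+sin(b-c)-sin(a-d)-sin(b-d))"
  shows "-((P+Q)/4) * inverse ((sin ((a-b+(c-d))/4))\<^sup>2) * tan ((a-b-(c-d))/4)
         + cot ((a-b+(c-d))/4) * (inverse ((cos ((a-b-(c-d))/4))\<^sup>2) * ((P-Q)/4)) = 0"
proof -
  define u where "u = (a-b+(c-d))/4"
  define v where "v = (a-b-(c-d))/4"
  define m where "m = (c+d-a-b)/2"
  have e1: "(d-a+(b-c))/2 = - 2 * u" "(d-a-(b-c))/2 = m" unfolding u_def m_def by (simp_all add: field_simps)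
  have "sin(d-a)+sin(b-c) = 2 * sin (- 2 * u)*cos m"
    using sin_plus_sin[of "d-a" "b-c"] unfolding e1 .
  moreover have "sin(a-c) = - sin(c-a)" "sin(b-d) = - sin(d-b)" "sin(a-d) = - sin(d-a)" "sin(c-b) = - sin(b-c)"
    by (metis minus_diff_eq sin_minus)+
  ultimately have PQ: "P+Q = - K * sin (2 * u) * cos m"
  proof -
    assume h: "sin(d-a)+sin(b-c) = 2 * sin (- 2 * u)*cos m"
      "sin(a-c) = - sin(c-a)" "sin(b-d) = - sin(d-b)" "sin(a-d) = - sin(d-a)" "sin(c-b) = - sin(b-c)"
    have "P+Q = K/2*(sin(d-a)+sin(b-c))" unfolding P_def Q_def h(2-5) by (simp add: algebra_simps)
    also have "\<dots> = - K * sin (2 * u) * cos m" unfolding h(1) by simp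
    finally show ?thesis .
  qed
  have e2: "(c-a-(d-b))/2 = - 2 * v" "(c-a+(d-b))/2 = m" unfolding v_def m_def by (simp_all add: field_simps)
  have "sin(c-a)-sin(d-b) = 2 * sin (- 2 * v)*cos m"
    using sin_diff_sin[of "c-a" "d-b"] unfolding e2 .
  have PmQ: "P-Q = - K * sin (2 * v) * cos m"
  proof -
    have "P-Q = K/2*(sin(c-a)-sin(d-b))" unfolding P_def Q_def
      using \<open>sin(a-c) = - sin(c-a)\<close> \<open>sin(b-d) = - sin(d-b)\<close> \<open>sin(a-d) = - sin(d-a)\<close> \<open>sin(c-b) = - sin(b-c)\<close>
      by (simp add: algebra_simps)
    also have "\<dots> = - K * sin (2 * v) * cos m" unfolding \<open>sin(c-a)-sin(d-b) = 2 * sin (- 2 * v)*cos m\<close> by simp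
    finally show ?thesis .
  qed
  have su': "sin u \<noteq> 0" and cv': "cos v \<noteq> 0" using su cv unfolding u_def v_def by auto
  show ?thesis
    unfolding u_def[symmetric] v_def[symmetric] PQ PmQ sin_double
    using su' cv' by (simp add: sin_double tan_def cot_def field_simps power2_eq_square)
qed

lemma sm: "sin (y - pi/2) = - cos y" by (simp add: sin_diff)
lemma sm2: "sin (- (pi/2)) = - 1" by simp

lemma rd1: "rhs \<omega> A (pi/2) 0 x 1 1 - rhs \<omega> A (pi/2) 0 x 1 2 = Kn A/4*(sin(x 2 1 - x 1 1)+sin(x 2 2 - x 1 1) - sin(x 2 1 - x 1 2) - sin(x 2 2 - x 1 2))"
proof -
  have "sin (x 1 2 - x 1 1 - pi/2) = sin (x 1 1 - x 1 2 - pi/2)" unfolding sm by (metis cos_minus minus_diff_eq)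
  then show ?thesis unfolding rhs_def by (simp add: algebra_simps)
qed

lemma rd2: "rhs \<omega> A (pi/2) 0 x 2 1 - rhs \<omega> A (pi/2) 0 x 2 2 = Kn A/4*(sin(x 1 1 - x 2 1)+sin(x 1 2 - x 2 1) - sin(x 1 1 - x 2 2) - sin(x 1 2 - x 2 2))"
proof -
  have "sin (x 2 2 - x 2 1 - pi/2) = sin (x 2 1 - x 2 2 - pi/2)" unfolding sm by (metis cos_minus minus_diff_eq)
  then show ?thesis unfolding rhs_def by (simp add: algebra_simps)
qed

theorem mainTheorem6:
  fixes \<theta> :: "real \<Rightarrow> nat \<Rightarrow> nat \<Rightarrow> real" and I :: "real set" and A \<omega> :: real
  assumes I: "is_interval I"
    and sol: "\<And>t \<sigma> k. t \<in> I \<Longrightarrow> \<sigma> \<in> {1,2} \<Longrightarrow> k \<in> {1,2} \<Longrightarrow>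
        ((\<lambda>s. \<theta> s \<sigma> k) has_real_derivative rhs \<omega> A (pi / 2) 0 (\<theta> t) \<sigma> k) (at t within I)"
    and def1: "\<And>t (n::int). t \<in> I \<Longrightarrow> (psi1 (\<theta> t) + psi3 (\<theta> t)) / 4 \<noteq> pi * of_int n"
    and def2: "\<And>t (n::int). t \<in> I \<Longrightarrow> (psi1 (\<theta> t) - psi3 (\<theta> t)) / 4 \<noteq> pi / 2 + pi * of_int n"
  shows "\<forall>s\<in>I. \<forall>t\<in>I. Hm10 (psi1 (\<theta> s)) (psi3 (\<theta> s)) = Hm10 (psi1 (\<theta> t)) (psi3 (\<theta> t))"
proof -
  let ?u = "\<lambda>t. (\<theta> t 1 1 - \<theta> t 1 2 + (\<theta> t 2 1 - \<theta> t 2 2)) / 4"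
  let ?v = "\<lambda>t. (\<theta> t 1 1 - \<theta> t 1 2 - (\<theta> t 2 1 - \<theta> t 2 2)) / 4"
  let ?f = "\<lambda>t. Hm10 (psi1 (\<theta> t)) (psi3 (\<theta> t))"
  have feq: "?f = (\<lambda>t. cot (?u t) * tan (?v t))"
    by (simp add: Hm10_def psi1_def psi3_def fun_eq_iff)
  have D: "(?f has_derivative (\<lambda>h. 0)) (at t within I)" if t: "t \<in> I" for t
  proof -
    define a where "a = \<theta> t 1 1"
    define b where "b = \<theta> t 1 2"
    define c where "c = \<theta> t 2 1"
    define d where "d = \<theta> t 2 2"
    define da where "da = rhs \<omega> A (pi / 2) 0 (\<theta> t) 1 1"
    define db where "db = rhs \<omega> A (pi / 2) 0 (\<theta> t) 1 2"
    define dc where "dc = rhs \<omega> A (pi / 2) 0 (\<theta> t) 2 1"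
    define dd where "dd = rhs \<omega> A (pi / 2) 0 (\<theta> t) 2 2"
    have ha: "((\<lambda>s. \<theta> s 1 1) has_real_derivative da) (at t within I)" using sol[OF t] da_def by auto
    have hb: "((\<lambda>s. \<theta> s 1 2) has_real_derivative db) (at t within I)" using sol[OF t] db_def by auto
    have hc: "((\<lambda>s. \<theta> s 2 1) has_real_derivative dc) (at t within I)" using sol[OF t] dc_def by auto
    have hd: "((\<lambda>s. \<theta> s 2 2) has_real_derivative dd) (at t within I)" using sol[OF t] dd_def by auto
    have hu: "(?u has_real_derivative (da - db + (dc - dd))/4) (at t within I)"
      by (rule DERIV_cdivide[OF DERIV_add[OF DERIV_diff[OF ha hb] DERIV_diff[OF hc hd]]])
    have hv: "(?v has_real_derivative (da - db - (dc - dd))/4) (at t within I)"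
      by (rule DERIV_cdivide[OF DERIV_diff[OF DERIV_diff[OF ha hb] DERIV_diff[OF hc hd]]])
    have su: "sin ((a-b+(c-d))/4) \<noteq> 0"
    proof
      assume "sin ((a-b+(c-d))/4) = 0"
      then obtain n::int where "(a-b+(c-d))/4 = of_int n * pi" by (auto simp: sin_zero_iff_int2)
      with def1[OF t, of n] show False by (simp add: a_def b_def c_def d_def psi1_def psi3_def mult.commute)
    qed
    have cv: "cos ((a-b-(c-d))/4) \<noteq> 0"
    proof
      assume "cos ((a-b-(c-d))/4) = 0"
      then obtain n::int where "(a-b-(c-d))/4 = of_int n * pi + pi/2" by (auto simp: cos_zero_iff_int2)
      with def2[OF t, of n] show False by (simp add: a_def b_def c_def d_def psi1_def psi3_def mult.commute add.commute)
    qed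
    have hcot: "((\<lambda>s. cot (?u s)) has_real_derivative (- inverse ((sin (?u t))\<^sup>2)) * ((da - db + (dc - dd))/4)) (at t within I)"
      by (rule DERIV_chain2[OF DERIV_cot hu]) (use su in \<open>simp add: a_def b_def c_def d_def\<close>)
    have htan: "((\<lambda>s. tan (?v s)) has_real_derivative (inverse ((cos (?v t))\<^sup>2)) * ((da - db - (dc - dd))/4)) (at t within I)"
      by (rule DERIV_chain2[OF DERIV_tan hv]) (use cv in \<open>simp add: a_def b_def c_def d_def\<close>)
    have hm: "((\<lambda>s. cot (?u s) * tan (?v s)) has_real_derivative
       cot (?u t) * (inverse ((cos (?v t))\<^sup>2) * ((da - db - (dc - dd))/4)) + (- inverse ((sin (?u t))\<^sup>2)) * ((da - db + (dc - dd))/4) * tan (?v t)) (at t within I)"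
      by (rule DERIV_mult'[OF hcot htan])
    have P: "da - db = Kn A/4*(sin(c-a)+sin(d-a)-sin(c-b)-sin(d-b))"
      unfolding da_def db_def a_def b_def c_def d_def by (rule rd1)
    have Q: "dc - dd = Kn A/4*(sin(a-c)+sin(b-c)-sin(a-d)-sin(b-d))"
      unfolding dc_def dd_def a_def b_def c_def d_def by (rule rd2)
    have z: "cot (?u t) * (inverse ((cos (?v t))\<^sup>2) * ((da - db - (dc - dd))/4)) + (- inverse ((sin (?u t))\<^sup>2)) * ((da - db + (dc - dd))/4) * tan (?v t) = 0"
      using key[OF su cv, of "Kn A"] unfolding P Q a_def b_def c_def d_def by (simp add: add.commute)
    have "(?f has_real_derivative 0) (at t within I)" using hm unfolding z feq .
    moreover have "((*) (0::real)) = (\<lambda>h. 0)" by auto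
    ultimately show ?thesis by (simp add: has_field_derivative_def)
  qed
  obtain C where "\<forall>x\<in>I. ?f x = C"
    using has_derivative_zero_constant[of I ?f] D is_interval_convex[OF I] by blast
  then show ?thesis by simp
qed
end
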